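(* Let $X$ be a Banach space and $Y$ a closed subspace of $X$ satisfying the $(\ast)$-condition, witnessed by a projection $P$ on $X^\ast$, and let $\delta_{\{Y\}}(\varepsilon)=\inf\{\|\varphi\|-\|P\varphi\|:\varphi\in B_{X^\ast},\ \|\varphi-P\varphi\|\ge\varepsilon\}$ (with $\inf\emptyset=\infty$). Let $\alpha$ be an ordinal and $\varepsilon>0$. If $\varphi\in s^\alpha_{3\varepsilon}(B_{X^\ast})$ and $\|\varphi|_Y\|>1-\delta_{\{Y\}}(\varepsilon)$, then $\varphi|_Y\in s^\alpha_\varepsilon(B_{Y^\ast})$.
   Context: $Y$ satisfies the $(\ast)$-condition, witnessed by $P$, if $P$ is a linear projection on $X^\ast$ with $\ker P=Y^\perp$, $\|P\|\le1$, and for every $\varepsilon>0$ there is $\delta(\varepsilon)>0$ with $\|\varphi-P\varphi\|<\varepsilon$ whenever $\|\varphi\|=1$ and $\|\varphi+P\varphi\|>2-\delta(\varepsilon)$. Szlenk derivations: for weak*-compact $K$ in a dual space, $s_\varepsilon(K)=\{x^\ast\in K:\ \text{every weak*-neighborhood } V \text{ of } x^\ast \text{ has } \mathrm{diam}(V\cap K)>\varepsilon\}$, $s^0_\varepsilon(K)=K$, $s^{\beta+1}_\varepsilon(K)=s_\varepsilon(s^\beta_\varepsilon(K))$, $s^\alpha_\varepsilon(K)=\bigcap_{\beta<\alpha}s^\beta_\varepsilon(K)$ for limit $\alpha$. *)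

theory Defs
  imports "HOL-Analysis.Analysis" "HOL-Library.Extended_Real"
begin

text \<open>Its weak*-topology is the topology of pointwise convergence on X,
  i.e. the pullback of the product topology on \<open>'a \<Rightarrow> real\<close> under evaluation.\<close>

definition weak_star :: "('a::real_normed_vector \<Rightarrow>\<^sub>L real) topology" where
  "weak_star = pullback_topology UNIV blinfun_apply euclidean"

definition dual_ball :: "('a::real_normed_vector \<Rightarrow>\<^sub>L real) set" where
  "dual_ball = {\<phi>. norm \<phi> \<le> 1}"

text \<open>The dual Y* of a (closed) subspace Y of X: bounded linear functionals on Y,
  represented canonically by functions on X vanishing outside Y.\<close>

definition sub_dual :: "'a::real_normed_vector set \<Rightarrow> ('a \<Rightarrow> real) set" where
  "sub_dual Y = {f. (\<forall>x\<in>Y. \<forall>y\<in>Y. f (x + y) = f x + f y)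
                  \<and> (\<forall>c. \<forall>x\<in>Y. f (c *\<^sub>R x) = c * f x)
                  \<and> (\<exists>C. \<forall>x\<in>Y. \<bar>f x\<bar> \<le> C * norm x)
                  \<and> (\<forall>x. x \<notin> Y \<longrightarrow> f x = 0)}"

definition sub_dual_norm :: "'a::real_normed_vector set \<Rightarrow> ('a \<Rightarrow> real) \<Rightarrow> real" where
  "sub_dual_norm Y f = (SUP x\<in>{x\<in>Y. norm x \<le> 1}. \<bar>f x\<bar>)"

definition sub_dual_ball :: "'a::real_normed_vector set \<Rightarrow> ('a \<Rightarrow> real) set" where
  "sub_dual_ball Y = {f\<in>sub_dual Y. sub_dual_norm Y f \<le> 1}"

text \<open>Weak*-topology on Y*: pointwise convergence on Y (functionals vanish off Y).\<close>
definition sub_weak_star :: "'a::real_normed_vector set \<Rightarrow> ('a \<Rightarrow> real) topology" where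
  "sub_weak_star Y = subtopology euclidean (sub_dual Y)"

definition restr :: "'a set \<Rightarrow> ('a::real_normed_vector \<Rightarrow>\<^sub>L real) \<Rightarrow> ('a \<Rightarrow> real)" where
  "restr Y \<phi> = (\<lambda>x. if x \<in> Y then blinfun_apply \<phi> x else 0)"

definition diam_n :: "('b::minus \<Rightarrow> real) \<Rightarrow> 'b set \<Rightarrow> ereal" where
  "diam_n nm S = (SUP p\<in>S \<times> S. ereal (nm (fst p - snd p)))"

definition szlenk_deriv :: "'b topology \<Rightarrow> ('b::minus \<Rightarrow> real) \<Rightarrow> real \<Rightarrow> 'b set \<Rightarrow> 'b set" where
  "szlenk_deriv T nm \<epsilon> K =
     {x\<in>K. \<forall>V. (\<exists>U. openin T U \<and> x \<in> U \<and> U \<subseteq> V) \<longrightarrow> diam_n nm (V \<inter> K) > ereal \<epsilon>}"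

text \<open>Transfinite iteration, indexed by the elements of the field of a well-order r
  (every ordinal is the order type of such an initial segment).
  Minimal element: K; successor of b: derivation of the b-th set; limit: intersection.\<close>

definition preds :: "'o rel \<Rightarrow> 'o \<Rightarrow> 'o set" where
  "preds r a = {b. (b, a) \<in> r \<and> b \<noteq> a}"

definition szlenk_iter ::
  "'b topology \<Rightarrow> ('b::minus \<Rightarrow> real) \<Rightarrow> real \<Rightarrow> 'b set \<Rightarrow> 'o rel \<Rightarrow> 'o \<Rightarrow> 'b set" where
  "szlenk_iter T nm \<epsilon> K r = wfrec (r - Id) (\<lambda>S a.
      if preds r a = {} then K
      else if (\<exists>b\<in>preds r a. \<forall>c\<in>preds r a. (c, b) \<in> r)
        then szlenk_deriv T nm \<epsilon> (S (THE b. b \<in> preds r a \<and> (\<forall>c\<in>preds r a. (c, b) \<in> r)))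
      else (\<Inter>b\<in>preds r a. S b))"

definition star_condition ::
  "'a::banach set \<Rightarrow> (('a \<Rightarrow>\<^sub>L real) \<Rightarrow> ('a \<Rightarrow>\<^sub>L real)) \<Rightarrow> bool" where
  "star_condition Y P \<longleftrightarrow>
     linear P \<and> (\<forall>\<phi>. P (P \<phi>) = P \<phi>)
     \<and> {\<phi>. P \<phi> = 0} = {\<phi>. \<forall>y\<in>Y. blinfun_apply \<phi> y = 0}
     \<and> (\<forall>\<phi>. norm (P \<phi>) \<le> norm \<phi>)
     \<and> (\<forall>\<epsilon>>0. \<exists>\<delta>>0. \<forall>\<phi>. norm \<phi> = 1 \<and> norm (\<phi> + P \<phi>) > 2 - \<delta>
                          \<longrightarrow> norm (\<phi> - P \<phi>) < \<epsilon>)"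

definition delta_Y :: "(('a::banach \<Rightarrow>\<^sub>L real) \<Rightarrow> ('a \<Rightarrow>\<^sub>L real)) \<Rightarrow> real \<Rightarrow> ereal" where
  "delta_Y P \<epsilon> = (INF \<phi>\<in>{\<phi>\<in>dual_ball. norm (\<phi> - P \<phi>) \<ge> \<epsilon>}. ereal (norm \<phi> - norm (P \<phi>)))"

end

theory Submission
  imports Defs
begin


definition hbA :: "'a::real_normed_vector set \<Rightarrow> ('a \<Rightarrow> real) \<Rightarrow> real \<Rightarrow> ('a \<times> real) set set" where
  "hbA Y f N = {G. subspace G \<and> (\<forall>y\<in>Y. (y, f y) \<in> G) \<and> (\<forall>p\<in>G. \<bar>snd p\<bar> \<le> N * norm (fst p))}"

lemma hb_step:
  fixes M :: "('a::real_normed_vector \<times> real) set"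
  assumes M: "M \<in> hbA Y f N" and N: "N \<ge> 0" and x0: "\<forall>a. (x0, a) \<notin> M"
  shows "\<exists>M'\<in>hbA Y f N. M \<subseteq> M' \<and> M' \<noteq> M"
proof -
  have sM: "subspace M" and Yin: "\<forall>y\<in>Y. (y, f y) \<in> M" and bd: "\<And>u a. (u,a)\<in>M \<Longrightarrow> \<bar>a\<bar> \<le> N * norm u"
    using M unfolding hbA_def by auto
  have addM: "(u+v, a+b) \<in> M" if "(u,a)\<in>M" "(v,b)\<in>M" for u v a b
    using subspace_add[OF sM that] by simp
  have scM: "(t *\<^sub>R u, t*a) \<in> M" if "(u,a)\<in>M" for t u a
    using subspace_scale[OF sM that, of t] by simp
  have zM: "(0,0) \<in> M" using subspace_0[OF sM] by (simp add: zero_prod_def)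
  define c where "c = (SUP p\<in>M. snd p - N * norm (fst p - x0))"
  have key: "b - N * norm (v - x0) \<le> N * norm (u + x0) - a" if "(u,a)\<in>M" "(v,b)\<in>M" for u a v b
  proof -
    have "a + b \<le> N * norm (u + v)" using bd[OF addM[OF that]] by simp
    also have "norm (u+v) \<le> norm (u + x0) + norm (v - x0)"
      using norm_triangle_ineq[of "u+x0" "v-x0"] by simp
    hence "N * norm (u + v) \<le> N * norm (u + x0) + N * norm (v - x0)"
      using N by (metis distrib_left mult_left_mono)
    finally show ?thesis by simp
  qed
  have bdd: "bdd_above ((\<lambda>p. snd p - N * norm (fst p - x0)) ` M)"
    using key[OF zM] by (intro bdd_aboveI2[where M="N * norm (0 + x0) - 0"]) auto
  have c1: "b - N * norm (v - x0) \<le> c" if "(v,b)\<in>M" for v b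
    unfolding c_def using cSUP_upper[OF that bdd] by simp
  have c2: "c \<le> N * norm (u + x0) - a" if "(u,a)\<in>M" for u a
    unfolding c_def using zM key[OF that] by (intro cSUP_least) auto
  define M' where "M' = {(u + t *\<^sub>R x0, a + t * c) | u a t. (u,a)\<in>M}"
  have one: "a + t * c \<le> N * norm (u + t *\<^sub>R x0)" if "(u,a)\<in>M" for u a t
  proof -
    consider "t = 0" | "t > 0" | "t < 0" by linarith
    then show ?thesis
    proof cases
      case 1 then show ?thesis using bd[OF that] by simp
    next
      case 2
      have "(inverse t *\<^sub>R u, inverse t * a) \<in> M" using scM[OF that] .
      from c2[OF this] have "inverse t * a + c \<le> N * norm (inverse t *\<^sub>R u + x0)" by simp
      hence "t * (inverse t * a + c) \<le> t * (N * norm (inverse t *\<^sub>R u + x0))"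
        using 2 by (intro mult_left_mono) auto
      also have "t * (N * norm (inverse t *\<^sub>R u + x0)) = N * norm (t *\<^sub>R (inverse t *\<^sub>R u + x0))"
        using 2 by simp
      also have "t *\<^sub>R (inverse t *\<^sub>R u + x0) = u + t *\<^sub>R x0" using 2 by (simp add: scaleR_add_right)
      finally show ?thesis using 2 by (simp add: algebra_simps)
    next
      case 3
      define s where "s = - t"
      have s: "s > 0" using 3 s_def by simp
      have "(inverse s *\<^sub>R u, inverse s * a) \<in> M" using scM[OF that] .
      from c1[OF this] have "inverse s * a - c \<le> N * norm (inverse s *\<^sub>R u - x0)" by simp
      hence "s * (inverse s * a - c) \<le> s * (N * norm (inverse s *\<^sub>R u - x0))"
        using s by (intro mult_left_mono) auto
      also have "s * (N * norm (inverse s *\<^sub>R u - x0)) = N * norm (s *\<^sub>R (inverse s *\<^sub>R u - x0))"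
        using s by simp
      also have "s *\<^sub>R (inverse s *\<^sub>R u - x0) = u + t *\<^sub>R x0" using s s_def by (simp add: scaleR_diff_right)
      finally show ?thesis using s s_def by (simp add: algebra_simps)
    qed
  qed
  have "M' \<in> hbA Y f N"
    unfolding hbA_def
  proof (intro CollectI conjI ballI)
    show "subspace M'"
      unfolding subspace_def
    proof (intro conjI ballI allI)
      show "0 \<in> M'" unfolding M'_def using zM by (auto simp: zero_prod_def intro!: exI[of _ 0])
    next
      fix p q assume "p \<in> M'" "q \<in> M'"
      then obtain u a t v b s where "p = (u + t *\<^sub>R x0, a + t * c)" "(u,a)\<in>M"
        "q = (v + s *\<^sub>R x0, b + s * c)" "(v,b)\<in>M" unfolding M'_def by blast
      moreover have "(u+v + (t+s) *\<^sub>R x0, (a+b) + (t+s) * c) \<in> M'"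
        unfolding M'_def using addM[OF \<open>(u,a)\<in>M\<close> \<open>(v,b)\<in>M\<close>] by blast
      ultimately show "p + q \<in> M'" by (simp add: algebra_simps scaleR_add_left)
    next
      fix k p assume "p \<in> M'"
      then obtain u a t where "p = (u + t *\<^sub>R x0, a + t * c)" "(u,a)\<in>M" unfolding M'_def by blast
      moreover have "(k *\<^sub>R u + (k*t) *\<^sub>R x0, (k*a) + (k*t) * c) \<in> M'"
        unfolding M'_def using scM[OF \<open>(u,a)\<in>M\<close>] by blast
      ultimately show "k *\<^sub>R p \<in> M'" by (simp add: algebra_simps scaleR_add_right)
    qed
  next
    fix y assume "y \<in> Y"
    then have "(y + 0 *\<^sub>R x0, f y + 0 * c) \<in> M'" unfolding M'_def using Yin by blast
    then show "(y, f y) \<in> M'" by simp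
  next
    fix p assume "p \<in> M'"
    then obtain u a t where p: "p = (u + t *\<^sub>R x0, a + t * c)" and ua: "(u,a)\<in>M" unfolding M'_def by blast
    have "a + t * c \<le> N * norm (u + t *\<^sub>R x0)" using one[OF ua] .
    moreover have "(-u, -a) \<in> M" using scM[OF ua, of "-1"] by simp
    from one[OF this, of "-t"] have "-(a + t * c) \<le> N * norm (-(u + t *\<^sub>R x0))" by simp
    moreover have "norm (-(u + t *\<^sub>R x0)) = norm (u + t *\<^sub>R x0)" by (rule norm_minus_cancel)
    ultimately show "\<bar>snd p\<bar> \<le> N * norm (fst p)" using p by (simp only: fst_conv snd_conv)
  qed
  moreover have "M \<subseteq> M'"
  proof
    fix p assume "p \<in> M"
    then obtain u a where ua: "p = (u,a)" "(u,a) \<in> M" by (cases p) auto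
    then have "(u + 0 *\<^sub>R x0, a + 0 * c) \<in> M'" unfolding M'_def by blast
    then show "p \<in> M'" using ua by simp
  qed
  moreover have "(0 + 1 *\<^sub>R x0, 0 + 1 * c) \<in> M'" unfolding M'_def using zM by blast
  then have "(x0, c) \<in> M'" by simp
  ultimately show ?thesis using x0 by blast
qed

lemma hahn_banach_ext:
  fixes Y :: "'a::real_normed_vector set" and f :: "'a \<Rightarrow> real"
  assumes "subspace Y" "linear f" "N \<ge> 0" "\<And>y. y \<in> Y \<Longrightarrow> \<bar>f y\<bar> \<le> N * norm y"
  shows "\<exists>\<xi>::'a \<Rightarrow>\<^sub>L real. (\<forall>y\<in>Y. blinfun_apply \<xi> y = f y) \<and> norm \<xi> \<le> N"
proof -
  define G0 where "G0 = (\<lambda>y. (y, f y)) ` Y"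
  have G0: "G0 \<in> hbA Y f N"
    unfolding hbA_def G0_def
  proof (intro CollectI conjI ballI)
    show "subspace ((\<lambda>y. (y, f y)) ` Y)"
      unfolding subspace_def using assms(1,2)
      by (auto simp: zero_prod_def linear_0[OF assms(2)] subspace_0 subspace_add subspace_scale linear_add linear_scale
          image_iff intro!: bexI[of _ "_ + _"] bexI[of _ "_ *\<^sub>R _"] bexI[of _ 0] linear_0[symmetric])
  qed (use assms(4) in auto)
  have "\<forall>C\<in>chains (hbA Y f N). \<exists>U\<in>hbA Y f N. \<forall>X\<in>C. X \<subseteq> U"
  proof
    fix C assume C: "C \<in> chains (hbA Y f N)"
    show "\<exists>U\<in>hbA Y f N. \<forall>X\<in>C. X \<subseteq> U"
    proof (cases "C = {}")
      case True then show ?thesis using G0 by auto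
    next
      case False
      have CA: "C \<subseteq> hbA Y f N" and ch: "\<And>X Z. X \<in> C \<Longrightarrow> Z \<in> C \<Longrightarrow> X \<subseteq> Z \<or> Z \<subseteq> X"
        using C unfolding chains_def chain_subset_def by auto
      have "\<Union>C \<in> hbA Y f N"
        unfolding hbA_def
      proof (intro CollectI conjI ballI)
        show "subspace (\<Union>C)"
          unfolding subspace_def
        proof (intro conjI ballI allI)
          obtain X where "X \<in> C" using False by auto
          then show "0 \<in> \<Union>C" using CA subspace_0 unfolding hbA_def by blast
        next
          fix p q assume "p \<in> \<Union>C" "q \<in> \<Union>C"
          then obtain X Z where XZ: "X\<in>C" "Z\<in>C" "p\<in>X" "q\<in>Z" by auto
          then have sX: "subspace X" "subspace Z" using CA unfolding hbA_def by auto
          from ch[OF XZ(1,2)] show "p + q \<in> \<Union>C"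
            using XZ sX subspace_add by blast
        next
          fix k p assume "p \<in> \<Union>C"
          then obtain X where "X\<in>C" "p\<in>X" by auto
          then show "k *\<^sub>R p \<in> \<Union>C" using CA subspace_scale unfolding hbA_def by blast
        qed
      next
        fix y assume "y \<in> Y"
        obtain X where "X \<in> C" using False by auto
        then show "(y, f y) \<in> \<Union>C" using CA \<open>y\<in>Y\<close> unfolding hbA_def by blast
      next
        fix p assume "p \<in> \<Union>C"
        then show "\<bar>snd p\<bar> \<le> N * norm (fst p)" using CA unfolding hbA_def by blast
      qed
      then show ?thesis by blast
    qed
  qed
  from Zorn_Lemma2[OF this] obtain M where M: "M \<in> hbA Y f N"
    and max: "\<And>X. X \<in> hbA Y f N \<Longrightarrow> M \<subseteq> X \<Longrightarrow> X = M" by blast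
  have sM: "subspace M" and Yin: "\<forall>y\<in>Y. (y, f y) \<in> M" and bd: "\<And>u a. (u,a)\<in>M \<Longrightarrow> \<bar>a\<bar> \<le> N * norm u"
    using M unfolding hbA_def by auto
  have addM: "(u+v, a+b) \<in> M" if "(u,a)\<in>M" "(v,b)\<in>M" for u v a b
    using subspace_add[OF sM that] by simp
  have scM: "(t *\<^sub>R u, t*a) \<in> M" if "(u,a)\<in>M" for t u a
    using subspace_scale[OF sM that, of t] by simp
  have tot: "\<exists>a. (x, a) \<in> M" for x
    using hb_step[OF M assms(3), of x] max by blast
  have uniq: "a = b" if "(x,a)\<in>M" "(x,b)\<in>M" for x a b
  proof -
    have "(x - x, a - b) \<in> M" using addM[OF that(1) scM[OF that(2), of "-1"]] by simp
    from bd[OF this] show ?thesis by simp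
  qed
  define g where "g x = (THE a. (x,a) \<in> M)" for x
  have gM: "(x, g x) \<in> M" for x
    unfolding g_def using tot[of x] uniq by (metis theI)
  have gadd: "g (x + y) = g x + g y" for x y using uniq[OF gM addM[OF gM gM]] .
  have gsc: "g (r *\<^sub>R x) = r *\<^sub>R g x" for r x using uniq[OF gM scM[OF gM]] by simp
  have gbd: "norm (g x) \<le> norm x * N" for x using bd[OF gM[of x]] by (simp add: mult.commute)
  have bl: "bounded_linear g" by (rule bounded_linear_intro[OF gadd gsc gbd])
  show ?thesis
  proof (intro exI conjI ballI)
    fix y assume "y \<in> Y" then show "blinfun_apply (Blinfun g) y = f y"
      using uniq[OF gM Yin[rule_format, OF \<open>y\<in>Y\<close>]] bounded_linear_Blinfun_apply[OF bl] by simp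
  next
    show "norm (Blinfun g) \<le> N"
      using gbd assms(3) by (intro norm_blinfun_bound) (auto simp: bounded_linear_Blinfun_apply[OF bl] mult.commute)
  qed
qed



lemma the_top:
  assumes "antisym r" "\<exists>b\<in>preds r a. \<forall>c\<in>preds r a. (c, b) \<in> r"
  shows "(THE b. b \<in> preds r a \<and> (\<forall>c\<in>preds r a. (c, b) \<in> r)) \<in> preds r a"
proof -
  from assms(2) obtain b where b: "b \<in> preds r a" "\<forall>c\<in>preds r a. (c, b) \<in> r" by blast
  have "b' = b" if "b' \<in> preds r a \<and> (\<forall>c\<in>preds r a. (c, b') \<in> r)" for b'
  proof -
    have "(b, b') \<in> r" using that b(1) by blast
    moreover have "(b', b) \<in> r" using that b(2) by blast
    ultimately show ?thesis using assms(1) antisymD by metis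
  qed
  then have "(THE b. b \<in> preds r a \<and> (\<forall>c\<in>preds r a. (c, b) \<in> r)) = b"
    using b by (intro the_equality) blast+
  then show ?thesis using b by simp
qed

lemma szlenk_iter_unfold:
  assumes wf: "wf (r - Id)" and an: "antisym r"
  shows "szlenk_iter T nm e K r a =
    (if preds r a = {} then K
     else if (\<exists>b\<in>preds r a. \<forall>c\<in>preds r a. (c, b) \<in> r)
       then szlenk_deriv T nm e (szlenk_iter T nm e K r (THE b. b \<in> preds r a \<and> (\<forall>c\<in>preds r a. (c, b) \<in> r)))
     else (\<Inter>b\<in>preds r a. szlenk_iter T nm e K r b))"
proof -
  have pr: "\<And>b. b \<in> preds r a \<Longrightarrow> (b, a) \<in> r - Id" unfolding preds_def by auto
  have c: "\<And>b. b \<in> preds r a \<Longrightarrow> cut (szlenk_iter T nm e K r) (r - Id) a b = szlenk_iter T nm e K r b"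
    by (rule cut_apply[OF pr])
  let ?Q = "\<exists>b\<in>preds r a. \<forall>c\<in>preds r a. (c, b) \<in> r"
  let ?t = "THE b. b \<in> preds r a \<and> (\<forall>c\<in>preds r a. (c, b) \<in> r)"
  let ?C = "cut (szlenk_iter T nm e K r) (r - Id) a"
  have eq: "szlenk_iter T nm e K r a = (if preds r a = {} then K else if ?Q then szlenk_deriv T nm e (?C ?t)
     else (\<Inter>b\<in>preds r a. ?C b))"
    unfolding szlenk_iter_def by (subst wfrec[OF wf]) (simp only:)
  have i: "(\<Inter>b\<in>preds r a. ?C b) = (\<Inter>b\<in>preds r a. szlenk_iter T nm e K r b)"
    by (rule INF_cong[OF refl c])
  show ?thesis
  proof (cases ?Q)
    case True
    show ?thesis unfolding eq using c[OF the_top[OF an True]] True by (simp only: if_True if_False simp_thms)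
  next
    case False
    show ?thesis unfolding eq using i False by (simp only: if_True if_False simp_thms)
  qed
qed

lemma szlenk_iter_subset:
  assumes wf: "wf (r - Id)" and an: "antisym r"
  shows "szlenk_iter T nm e K r a \<subseteq> K"
  using wf
proof (induction a rule: wf_induct_rule)
  case (less a)
  have pr: "\<And>b. b \<in> preds r a \<Longrightarrow> (b, a) \<in> r - Id" unfolding preds_def by auto
  show ?case
    apply (subst szlenk_iter_unfold[OF wf an])
    apply (rule if_split[THEN iffD2])
    apply (intro conjI impI)
    subgoal by simp
    apply (rule if_split[THEN iffD2])
    apply (intro conjI impI)
    subgoal
      apply (rule subset_trans[OF _ less[OF pr[OF the_top[OF an]]]])
      unfolding szlenk_deriv_def by auto
    subgoal premises h using less pr h(1) by blast
    done
qed



lemma open_vimage_UNIV: "continuous_on UNIV f \<Longrightarrow> open B \<Longrightarrow> open (f -` B)"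
  using continuous_on_open_vimage[of UNIV f] by auto

lemma open_ereal_abs: "open {t::real. c < ereal \<bar>t\<bar>}"
proof (cases c)
  case (real x)
  then show ?thesis by (simp, intro open_Collect_less continuous_intros)
next
  case PInf then show ?thesis by simp
next
  case MInf then show ?thesis by simp
qed

definition uball :: "'a::real_normed_vector set \<Rightarrow> 'a set" where
  "uball Y = {x\<in>Y. norm x \<le> 1}"

lemma uball_ne: "subspace Y \<Longrightarrow> uball Y \<noteq> {}"
  unfolding uball_def using subspace_0 by force

lemma bdd_restr:
  fixes \<psi> :: "'a::real_normed_vector \<Rightarrow>\<^sub>L real"
  shows "bdd_above ((\<lambda>x. \<bar>blinfun_apply \<psi> x\<bar>) ` uball Y)"
proof -
  have h: "\<bar>blinfun_apply \<psi> x\<bar> \<le> norm \<psi>" if "x \<in> uball Y" for x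
  proof -
    have "norm x \<le> 1" using that unfolding uball_def by auto
    then have "norm \<psi> * norm x \<le> norm \<psi>" by (simp add: mult_left_le)
    then show ?thesis using norm_blinfun[of \<psi> x] by simp
  qed
  show ?thesis by (rule bdd_aboveI2[OF h])
qed

lemma nY_eq: "sub_dual_norm Y (restr Y \<psi>) = (SUP x\<in>uball Y. \<bar>blinfun_apply \<psi> x\<bar>)"
  unfolding sub_dual_norm_def restr_def uball_def[symmetric]
  by (intro SUP_cong) (auto simp: uball_def)

lemma nY_bound:
  assumes "subspace Y" "y \<in> Y"
  shows "\<bar>blinfun_apply \<psi> y\<bar> \<le> sub_dual_norm Y (restr Y \<psi>) * norm y"
proof (cases "y = 0")
  case True then show ?thesis by simp
next
  case False
  have "inverse (norm y) *\<^sub>R y \<in> uball Y" unfolding uball_def using assms False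
    by (simp add: subspace_scale)
  then have "\<bar>blinfun_apply \<psi> (inverse (norm y) *\<^sub>R y)\<bar> \<le> sub_dual_norm Y (restr Y \<psi>)"
    unfolding nY_eq by (rule cSUP_upper[OF _ bdd_restr])
  then have "inverse (norm y) * \<bar>blinfun_apply \<psi> y\<bar> \<le> sub_dual_norm Y (restr Y \<psi>)"
    by (simp add: blinfun.scaleR_right abs_mult)
  then show ?thesis using False by (simp add: field_simps)
qed

lemma nY_nonneg: "subspace Y \<Longrightarrow> 0 \<le> sub_dual_norm Y (restr Y \<psi>)"
  unfolding nY_eq using subspace_0[of Y]
  by (intro order.trans[OF _ cSUP_upper[OF _ bdd_restr, of 0]]) (auto simp: uball_def)

lemma nY_le:
  assumes "subspace Y" "\<And>y. y \<in> Y \<Longrightarrow> blinfun_apply \<xi> y = blinfun_apply \<psi> y"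
  shows "sub_dual_norm Y (restr Y \<psi>) \<le> norm \<xi>"
  unfolding nY_eq
proof (rule cSUP_least[OF uball_ne[OF assms(1)]])
  fix x assume x: "x \<in> uball Y"
  then have "norm x \<le> 1" "x \<in> Y" unfolding uball_def by auto
  then have "norm \<xi> * norm x \<le> norm \<xi>" by (simp add: mult_left_le)
  then show "\<bar>blinfun_apply \<psi> x\<bar> \<le> norm \<xi>" using norm_blinfun[of \<xi> x] assms(2)[OF \<open>x\<in>Y\<close>] by simp
qed

lemma restr_in_dual:
  assumes "subspace Y"
  shows "restr Y \<psi> \<in> sub_dual Y"
    unfolding sub_dual_def restr_def using assms(1)
    by (auto simp: subspace_add subspace_scale blinfun.add_right blinfun.scaleR_right
        intro!: exI[of _ "norm \<psi>"] norm_blinfun[of \<psi>, simplified])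

lemma restr_in_ball:
  assumes "subspace Y" "\<psi> \<in> dual_ball"
  shows "restr Y \<psi> \<in> sub_dual_ball Y"
proof -
  have "restr Y \<psi> \<in> sub_dual Y" by (rule restr_in_dual[OF assms(1)])
  moreover have "sub_dual_norm Y (restr Y \<psi>) \<le> 1"
    using nY_le[OF assms(1), of \<psi> \<psi>] assms(2) unfolding dual_ball_def by auto
  ultimately show ?thesis unfolding sub_dual_ball_def by auto
qed

lemma P_agree:
  assumes "star_condition Y P" "y \<in> Y"
  shows "blinfun_apply (P \<psi>) y = blinfun_apply \<psi> y"
proof -
  have lin: "linear P" and idem: "P (P \<psi>) = P \<psi>"
    and ker: "{\<phi>. P \<phi> = 0} = {\<phi>. \<forall>y\<in>Y. blinfun_apply \<phi> y = 0}"
    using assms(1) unfolding star_condition_def by auto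
  have "P (\<psi> - P \<psi>) = 0" using linear_diff[OF lin] idem by simp
  then have "\<psi> - P \<psi> \<in> {\<phi>. \<forall>y\<in>Y. blinfun_apply \<phi> y = 0}" using ker by blast
  then show ?thesis using assms(2) by (simp add: blinfun.diff_left)
qed

lemma P_norm_le:
  assumes "star_condition Y P" "subspace Y"
  shows "norm (P \<zeta>) \<le> sub_dual_norm Y (restr Y \<zeta>)"
proof -
  have lin: "linear P" and ker: "{\<phi>. P \<phi> = 0} = {\<phi>. \<forall>y\<in>Y. blinfun_apply \<phi> y = 0}"
    and nP: "\<And>\<phi>. norm (P \<phi>) \<le> norm \<phi>"
    using assms(1) unfolding star_condition_def by auto
  obtain \<xi> where \<xi>: "\<forall>y\<in>Y. blinfun_apply \<xi> y = blinfun_apply \<zeta> y"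
    and n\<xi>: "norm \<xi> \<le> sub_dual_norm Y (restr Y \<zeta>)"
    using hahn_banach_ext[OF assms(2) bounded_linear.linear[OF blinfun.bounded_linear_right]
        nY_nonneg[OF assms(2)] nY_bound[OF assms(2)]] by blast
  have "\<xi> - \<zeta> \<in> {\<phi>. \<forall>y\<in>Y. blinfun_apply \<phi> y = 0}" using \<xi> by (simp add: blinfun.diff_left)
  then have "P (\<xi> - \<zeta>) = 0" using ker by blast
  then have "P \<xi> = P \<zeta>" using linear_diff[OF lin] by simp
  then show ?thesis using nP[of \<xi>] n\<xi> by simp
qed

lemma open_W:
  assumes "subspace Y" "openin (sub_weak_star Y) U"
  shows "openin weak_star {\<psi>. restr Y \<psi> \<in> U \<and> c < ereal (sub_dual_norm Y (restr Y \<psi>))}"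
proof -
  obtain S where S: "open S" "U = S \<inter> sub_dual Y"
    using assms(2) unfolding sub_weak_star_def openin_subtopology by auto
  define A where "A = (\<lambda>h::'a\<Rightarrow>real. \<lambda>x. if x \<in> Y then h x else 0) -` S"
  define B where "B = (\<Union>x\<in>uball Y. (\<lambda>h::'a\<Rightarrow>real. h x) -` {t. c < ereal \<bar>t\<bar>})"
  have oA: "open A" unfolding A_def
    apply (intro open_vimage_UNIV S continuous_on_coordinatewise_then_product)
    subgoal for i by (cases "i \<in> Y") (simp_all add: continuous_on_const)
    done
  have oB: "open B" unfolding B_def
    by (intro open_UN ballI open_vimage_UNIV open_ereal_abs continuous_on_product_coordinates)
  have sd: "restr Y \<psi> \<in> sub_dual Y" for \<psi>
    by (rule restr_in_dual[OF assms(1)])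
  have eqc: "c < ereal (sub_dual_norm Y (restr Y \<psi>)) \<longleftrightarrow> (\<exists>x\<in>uball Y. c < ereal \<bar>blinfun_apply \<psi> x\<bar>)" for \<psi>
  proof (cases c)
    case (real r)
    then show ?thesis unfolding nY_eq using less_cSUP_iff[OF uball_ne[OF assms(1)] bdd_restr] by simp
  next
    case PInf then show ?thesis by simp
  next
    case MInf then show ?thesis using uball_ne[OF assms(1)] by auto
  qed
  have "{\<psi>. restr Y \<psi> \<in> U \<and> c < ereal (sub_dual_norm Y (restr Y \<psi>))} = blinfun_apply -` (A \<inter> B) \<inter> UNIV"
    unfolding A_def B_def S(2) using sd eqc by (auto simp: restr_def)
  then show ?thesis unfolding weak_star_def openin_pullback_topology using oA oB by auto
qed



theorem lemma3p8:
  fixes Y :: "'a::banach set"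
    and P :: "('a \<Rightarrow>\<^sub>L real) \<Rightarrow> ('a \<Rightarrow>\<^sub>L real)"
    and r :: "'o rel" and \<alpha> :: 'o
    and \<epsilon> :: real and \<phi> :: "'a \<Rightarrow>\<^sub>L real"
  assumes "subspace Y" and "closed Y"
    and "star_condition Y P"
    and "Well_order r" and "\<alpha> \<in> Field r"
    and "\<epsilon> > 0"
    and "\<phi> \<in> szlenk_iter weak_star norm (3 * \<epsilon>) dual_ball r \<alpha>"
    and "ereal (sub_dual_norm Y (restr Y \<phi>)) > 1 - delta_Y P \<epsilon>"
  shows "restr Y \<phi> \<in> szlenk_iter (sub_weak_star Y) (sub_dual_norm Y) \<epsilon> (sub_dual_ball Y) r \<alpha>"
proof -
  note sY = assms(1) and sc = assms(3)
  have wf: "wf (r - Id)" and an: "antisym r"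
    using assms(4) unfolding well_order_on_def linear_order_on_def partial_order_on_def by auto
  have lin: "linear P" and nP: "\<And>\<phi>. norm (P \<phi>) \<le> norm \<phi>"
    using sc unfolding star_condition_def by auto
  define IX :: "'o \<Rightarrow> ('a \<Rightarrow>\<^sub>L real) set" where "IX = szlenk_iter weak_star norm (3 * \<epsilon>) dual_ball r"
  define IY where "IY = szlenk_iter (sub_weak_star Y) (sub_dual_norm Y) \<epsilon> (sub_dual_ball Y) r"
  define c where "c = 1 - delta_Y P \<epsilon>"
  have key1: "norm (\<psi> - P \<psi>) < \<epsilon>" if b: "\<psi> \<in> dual_ball" and cn: "c < ereal (sub_dual_norm Y (restr Y \<psi>))" for \<psi>
  proof (rule ccontr)
    assume "\<not> norm (\<psi> - P \<psi>) < \<epsilon>"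
    then have "\<psi> \<in> {\<phi>\<in>dual_ball. norm (\<phi> - P \<phi>) \<ge> \<epsilon>}" using b by auto
    then have d: "delta_Y P \<epsilon> \<le> ereal (norm \<psi> - norm (P \<psi>))"
      unfolding delta_Y_def by (rule INF_lower)
    have "1 - ereal (norm \<psi> - norm (P \<psi>)) \<le> c"
      unfolding c_def by (rule ereal_minus_mono[OF order.refl d])
    then have "ereal (1 - (norm \<psi> - norm (P \<psi>))) \<le> c" by (simp add: one_ereal_def)
    moreover have "sub_dual_norm Y (restr Y \<psi>) \<le> norm (P \<psi>)"
      using nY_le[OF sY, of "P \<psi>" \<psi>] P_agree[OF sc] by blast
    moreover have "norm \<psi> \<le> 1" using b unfolding dual_ball_def by simp
    ultimately have "ereal (sub_dual_norm Y (restr Y \<psi>)) \<le> c"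
    proof -
      assume a1: "ereal (1 - (norm \<psi> - norm (P \<psi>))) \<le> c"
        and a2: "sub_dual_norm Y (restr Y \<psi>) \<le> norm (P \<psi>)" and a3: "norm \<psi> \<le> 1"
      have "sub_dual_norm Y (restr Y \<psi>) \<le> 1 - (norm \<psi> - norm (P \<psi>))" using a2 a3 by linarith
      then have "ereal (sub_dual_norm Y (restr Y \<psi>)) \<le> ereal (1 - (norm \<psi> - norm (P \<psi>)))" by simp
      then show ?thesis using a1 by (rule order_trans)
    qed
    then show False using cn by simp
  qed
  have key2: "norm (\<psi>1 - \<psi>2) \<le> 3 * \<epsilon>"
    if "\<psi>1 \<in> dual_ball" "c < ereal (sub_dual_norm Y (restr Y \<psi>1))"
       "\<psi>2 \<in> dual_ball" "c < ereal (sub_dual_norm Y (restr Y \<psi>2))"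
       "sub_dual_norm Y (restr Y \<psi>1 - restr Y \<psi>2) \<le> \<epsilon>" for \<psi>1 \<psi>2
  proof -
    have e1: "norm (\<psi>1 - P \<psi>1) < \<epsilon>" using key1 that by blast
    have e2: "norm (\<psi>2 - P \<psi>2) < \<epsilon>" using key1 that by blast
    have rd: "restr Y \<psi>1 - restr Y \<psi>2 = restr Y (\<psi>1 - \<psi>2)"
      by (rule ext) (simp add: restr_def blinfun.diff_left)
    have "norm (P (\<psi>1 - \<psi>2)) \<le> \<epsilon>" using P_norm_le[OF sc sY, of "\<psi>1 - \<psi>2"] that(5) rd by simp
    then have e3: "norm (P \<psi>1 - P \<psi>2) \<le> \<epsilon>" using linear_diff[OF lin] by simp
    have "\<psi>1 - \<psi>2 = (\<psi>1 - P \<psi>1) + (P \<psi>1 - P \<psi>2) - (\<psi>2 - P \<psi>2)" by simp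
    then have "norm (\<psi>1 - \<psi>2) \<le> norm (\<psi>1 - P \<psi>1) + norm (P \<psi>1 - P \<psi>2) + norm (\<psi>2 - P \<psi>2)"
    proof -
      have "norm ((\<psi>1 - P \<psi>1) + (P \<psi>1 - P \<psi>2) - (\<psi>2 - P \<psi>2)) \<le> norm ((\<psi>1 - P \<psi>1) + (P \<psi>1 - P \<psi>2)) + norm (\<psi>2 - P \<psi>2)"
        by (rule norm_triangle_ineq4)
      moreover have "norm ((\<psi>1 - P \<psi>1) + (P \<psi>1 - P \<psi>2)) \<le> norm (\<psi>1 - P \<psi>1) + norm (P \<psi>1 - P \<psi>2)"
        by (rule norm_triangle_ineq)
      moreover have "norm (\<psi>1 - \<psi>2) = norm ((\<psi>1 - P \<psi>1) + (P \<psi>1 - P \<psi>2) - (\<psi>2 - P \<psi>2))"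
        using \<open>\<psi>1 - \<psi>2 = _\<close> by (rule arg_cong)
      ultimately show ?thesis by linarith
    qed
    then show ?thesis using e1 e2 e3 by linarith
  qed
  have main: "\<forall>\<psi>. \<psi> \<in> IX a \<longrightarrow> c < ereal (sub_dual_norm Y (restr Y \<psi>)) \<longrightarrow> restr Y \<psi> \<in> IY a" for a
    using wf
  proof (induction a rule: wf_induct_rule)
    case (less a)
    have pr: "\<And>b. b \<in> preds r a \<Longrightarrow> (b, a) \<in> r - Id" unfolding preds_def by auto
    show ?case
    proof (intro allI impI)
      fix \<psi> assume \<psi>: "\<psi> \<in> IX a" and c\<psi>: "c < ereal (sub_dual_norm Y (restr Y \<psi>))"
      consider (z) "preds r a = {}" | (s) "preds r a \<noteq> {}" "\<exists>b\<in>preds r a. \<forall>c\<in>preds r a. (c, b) \<in> r"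
        | (l) "preds r a \<noteq> {}" "\<not> (\<exists>b\<in>preds r a. \<forall>c\<in>preds r a. (c, b) \<in> r)" by blast
      then show "restr Y \<psi> \<in> IY a"
      proof cases
        case z
        have "IX a = dual_ball" unfolding IX_def by (subst szlenk_iter_unfold[OF wf an]) (simp add: z)
        moreover have "IY a = sub_dual_ball Y" unfolding IY_def by (subst szlenk_iter_unfold[OF wf an]) (simp add: z)
        ultimately show ?thesis using \<psi> restr_in_ball[OF sY] by simp
      next
        case l
        have "IX a = (\<Inter>b\<in>preds r a. IX b)" unfolding IX_def
          by (subst szlenk_iter_unfold[OF wf an]) (simp only: l if_False)
        then have "\<psi> \<in> IX b" if "b \<in> preds r a" for b
          using \<psi> that by auto
        then have "restr Y \<psi> \<in> IY b" if "b \<in> preds r a" for b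
          using less[OF pr[OF that]] c\<psi> that by blast
        moreover have "IY a = (\<Inter>b\<in>preds r a. IY b)" unfolding IY_def
          by (subst szlenk_iter_unfold[OF wf an]) (simp only: l if_False)
        ultimately show ?thesis by auto
      next
        case s
        define t where "t = (THE b. b \<in> preds r a \<and> (\<forall>c\<in>preds r a. (c, b) \<in> r))"
        have tr: "(t, a) \<in> r - Id" unfolding t_def by (rule pr[OF the_top[OF an s(2)]])
        have IXa: "IX a = szlenk_deriv weak_star norm (3 * \<epsilon>) (IX t)"
          unfolding IX_def t_def by (subst szlenk_iter_unfold[OF wf an]) (simp only: s if_False if_True)
        have IYa: "IY a = szlenk_deriv (sub_weak_star Y) (sub_dual_norm Y) \<epsilon> (IY t)"
          unfolding IY_def t_def by (subst szlenk_iter_unfold[OF wf an]) (simp only: s if_False if_True)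
        have IH: "\<And>\<psi>. \<psi> \<in> IX t \<Longrightarrow> c < ereal (sub_dual_norm Y (restr Y \<psi>)) \<Longrightarrow> restr Y \<psi> \<in> IY t"
          using less[OF tr] by blast
        have IXb: "IX t \<subseteq> dual_ball" unfolding IX_def by (rule szlenk_iter_subset[OF wf an])
        have \<psi>t: "\<psi> \<in> IX t" and der: "\<And>V. (\<exists>U. openin weak_star U \<and> \<psi> \<in> U \<and> U \<subseteq> V) \<Longrightarrow>
            diam_n norm (V \<inter> IX t) > ereal (3 * \<epsilon>)"
          using \<psi> unfolding IXa szlenk_deriv_def by auto
        show ?thesis
          unfolding IYa szlenk_deriv_def
        proof (intro CollectI conjI allI impI)
          show "restr Y \<psi> \<in> IY t" by (rule IH[OF \<psi>t c\<psi>])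
        next
          fix V assume "\<exists>U. openin (sub_weak_star Y) U \<and> restr Y \<psi> \<in> U \<and> U \<subseteq> V"
          then obtain U where U: "openin (sub_weak_star Y) U" "restr Y \<psi> \<in> U" "U \<subseteq> V" by blast
          show "ereal \<epsilon> < diam_n (sub_dual_norm Y) (V \<inter> IY t)"
          proof (rule ccontr)
            assume "\<not> ereal \<epsilon> < diam_n (sub_dual_norm Y) (V \<inter> IY t)"
            then have dV: "diam_n (sub_dual_norm Y) (V \<inter> IY t) \<le> ereal \<epsilon>" by simp
            define W where "W = {\<psi>. restr Y \<psi> \<in> U \<and> c < ereal (sub_dual_norm Y (restr Y \<psi>))}"
            have "openin weak_star W" unfolding W_def by (rule open_W[OF sY U(1)])
            moreover have "\<psi> \<in> W" unfolding W_def using U(2) c\<psi> by simp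
            ultimately have big: "diam_n norm (W \<inter> IX t) > ereal (3 * \<epsilon>)" using der by blast
            have "diam_n norm (W \<inter> IX t) \<le> ereal (3 * \<epsilon>)"
              unfolding diam_n_def
            proof (rule SUP_least)
              fix p assume p: "p \<in> (W \<inter> IX t) \<times> (W \<inter> IX t)"
              obtain \<psi>1 \<psi>2 where p12: "p = (\<psi>1, \<psi>2)" by (cases p)
              have h1: "\<psi>1 \<in> W" "\<psi>1 \<in> IX t" and h2: "\<psi>2 \<in> W" "\<psi>2 \<in> IX t" using p p12 by auto
              have c1: "c < ereal (sub_dual_norm Y (restr Y \<psi>1))" "restr Y \<psi>1 \<in> U"
                and c2: "c < ereal (sub_dual_norm Y (restr Y \<psi>2))" "restr Y \<psi>2 \<in> U"
                using h1 h2 unfolding W_def by auto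
              have "(restr Y \<psi>1, restr Y \<psi>2) \<in> (V \<inter> IY t) \<times> (V \<inter> IY t)"
                using IH[OF h1(2) c1(1)] IH[OF h2(2) c2(1)] c1(2) c2(2) U(3) by auto
              then have "ereal (sub_dual_norm Y (fst (restr Y \<psi>1, restr Y \<psi>2) - snd (restr Y \<psi>1, restr Y \<psi>2)))
                  \<le> diam_n (sub_dual_norm Y) (V \<inter> IY t)"
                unfolding diam_n_def by (rule SUP_upper)
              then have "ereal (sub_dual_norm Y (restr Y \<psi>1 - restr Y \<psi>2)) \<le> ereal \<epsilon>"
                using order_trans[OF _ dV] by (simp only: fst_conv snd_conv)
              then have "sub_dual_norm Y (restr Y \<psi>1 - restr Y \<psi>2) \<le> \<epsilon>" by simp
              then have "norm (\<psi>1 - \<psi>2) \<le> 3 * \<epsilon>"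
                using key2 IXb h1(2) h2(2) c1(1) c2(1) by blast
              then show "ereal (norm (fst p - snd p)) \<le> ereal (3 * \<epsilon>)" using p12 by simp
            qed
            then show False using big by simp
          qed
        qed
      qed
    qed
  qed
  show ?thesis using main assms(7,8) unfolding IX_def IY_def c_def by blast
qed

end
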